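(* Let $\mathbf B$ be a polite basis of $\mathscr O=\mathscr O(N)$. Then for each convex polytope $K$ in $Q_{\mathbb R}$, the subspace $\mathscr S(K)$ is spanned by $\mathbf B\cap\mathscr S(K)$.
   Context: Setting. $k$ is a field of characteristic $0$, $G$ a split connected reductive group over $k$ with Borel $B$, maximal torus $T$, simple roots $\{\alpha_i\}_{i\in I}$, root lattice $Q$, $Q_\pm$ the submonoid generated by positive/negative roots, $Q_{\mathbb R}=Q\otimes\mathbb R$, $\operatorname{ht}(\sum c_i\alpha_i)=\sum c_i$. $N$ is the unipotent radical of $B$, $\mathfrak n$ its Lie algebra, $e_i$ a root vector of weight $\alpha_i$, $\mathscr O=\mathscr O(N)=\bigoplus_{\lambda\in Q_-}\mathscr O_\lambda$ (grading from conjugation by $T$), coproduct $\Delta$, identified with the graded dual of $U(\mathfrak n)$ via $\langle x,f\rangle=(x\cdot f)(1_N)$ with $(n\cdot f)(m)=f(mn)$; $\zeta_i\in\mathscr O_{-\alpha_i}$ with $\langle e_i,\zeta_i\rangle=1$. For $f\in\mathscr O_\lambda$, $\underline L(f)$ is the set of $\mu$ such that $\Delta(f)$ has a nonzero component in $\mathscr O_\mu\otimes\mathscr O_{\lambda-\mu}$ and $\underline{\mathrm{Pol}}(f)$ its convex hull. For a convex polytope $K\subset Q_{\mathbb R}$, $\mathscr S(K)$ is the span of the weight vectors $f$ with $\underline{\mathrm{Pol}}(f)\subset K$. Polite bases. For $\theta\in Q_{\mathbb R}^*$, $J_\theta(\lambda)=-(\operatorname{ht}\lambda,\theta(\lambda))$,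 $\Gamma_\theta=J_\theta(Q_-)$, $\mathscr O^\gamma=\bigoplus_{J_\theta(\lambda)=\gamma}\mathscr O_\lambda$; for $\Gamma_\theta$-homogeneous $a$, $L_\theta(a)$ is the set of $\beta$ with nonzero component of $\Delta(a)$ in $\mathscr O^\beta\otimes\mathscr O^{|a|-\beta}$, $R_\theta(a)=|a|-L_\theta(a)$. $\Pi'=\{(r,d): d<0\text{ or }(d=0,r\ge0)\}$, $\Pi''=\{(r,d): d>0\text{ or }(d=0,r\ge0)\}$, $\alpha\le'\beta$ iff $\alpha+\Pi'\subset\beta+\Pi'$, $\alpha\le''\beta$ iff $\alpha+\Pi''\subset\beta+\Pi''$. ${}^\theta F'_\alpha\mathscr O$ (resp. ${}^\theta F''_\beta\mathscr O$) is the span of homogeneous $a$ with $L_\theta(a)\subset\alpha+\Pi'$ (resp. $R_\theta(a)\subset\beta+\Pi''$), associated graded $\mathrm{gr}'$, $\mathrm{gr}''$. $\mathscr O_{[\le0]}={}^\theta F'_0\mathscr O$, $\mathscr O_{[>0]}=\bigoplus_\gamma({}^\theta F'_\gamma\mathscr O\cap\mathscr O^\gamma)$, $\mathscr O_{[\ge0]}={}^\theta F''_0\mathscr O$, $\mathscr O_{[<0]}=\bigoplus_\gamma({}^\theta F''_\gamma\mathscr O\cap\mathscr O^\gamma)$. The algebra isomorphisms $\overline\Delta':\mathrm{gr}'\mathscr O\to\mathscr O_{[>0]}\otimes\mathscr O_{[\le0]}$ and $\overline\Delta'':\mathrm{gr}''\mathscr O\to\mathscr O_{[\ge0]}\otimes\mathscr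 O_{[<0]}$ send the class of homogeneous $a$ in $\mathrm{gr}'_\alpha$ (resp. $\mathrm{gr}''_\beta$) to the component of $\Delta(a)$ in $\mathscr O^\alpha\otimes\mathscr O^{|a|-\alpha}$ (resp. $\mathscr O^{|a|-\beta}\otimes\mathscr O^\beta$). A basis $\mathbf B$ is polite if (i) it consists of weight vectors; (ii) $\zeta_i^n\in\mathbf B$ for all $i,n$; (iii) for every $\theta,\gamma$, ${}^\theta F'_\gamma\mathscr O$ is spanned by $\mathbf B\cap{}^\theta F'_\gamma\mathscr O$ and $\overline\Delta'$ maps the induced basis of $\mathrm{gr}'\mathscr O$ onto the tensor product of the induced bases of $\mathscr O_{[>0]}$, $\mathscr O_{[\le0]}$; (iv) the analogous condition for $F''$ and $\overline\Delta''$. *)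

theory Defs
  imports "HOL-Analysis.Analysis"
begin

text \<open>The unipotent radical N of a Borel subgroup of a split connected reductive group
depends only on the Cartan matrix (a_ij) of the root system, indexed by the simple roots I.\<close>

definition cartan_finite_type :: "'i set \<Rightarrow> ('i \<Rightarrow> 'i \<Rightarrow> int) \<Rightarrow> bool" where
  "cartan_finite_type I A \<longleftrightarrow>
     finite I \<and>
     (\<forall>i\<in>I. A i i = 2) \<and>
     (\<forall>i\<in>I. \<forall>j\<in>I. i \<noteq> j \<longrightarrow> A i j \<le> 0 \<and> (A i j = 0 \<longleftrightarrow> A j i = 0)) \<and>
     (\<exists>d :: 'i \<Rightarrow> real. (\<forall>i\<in>I. d i > 0) \<and>
        (\<forall>i\<in>I. \<forall>j\<in>I. d i * of_int (A i j) = d j * of_int (A j i)) \<and>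
        (\<forall>x :: 'i \<Rightarrow> real. (\<exists>i\<in>I. x i \<noteq> 0) \<longrightarrow>
            (\<Sum>i\<in>I. \<Sum>j\<in>I. d i * of_int (A i j) * x i * x j) > 0))"

definition lin_comb :: "('a \<Rightarrow> 'k::field) set \<Rightarrow> ('a \<Rightarrow> 'k) set" where
  "lin_comb S = {f. \<exists>t c. finite t \<and> t \<subseteq> S \<and> f = (\<lambda>x. \<Sum>b\<in>t. c b * b x)}"

definition lin_indep :: "('a \<Rightarrow> 'k::field) set \<Rightarrow> bool" where
  "lin_indep S \<longleftrightarrow> (\<forall>t c. finite t \<and> t \<subseteq> S \<and> (\<lambda>x. \<Sum>b\<in>t. c b * b x) = (\<lambda>x. 0)
        \<longrightarrow> (\<forall>b\<in>t. c b = 0))"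

text \<open>U(n) is generated by the e_i (i in I) subject to the Serre relations
(ad e_i)^(1-a_ij)(e_j) = 0 (char 0). Its graded dual O(N) is realised as the space of
finitely supported k-valued functions on words in I that vanish on the two-sided ideal
generated by the Serre relations; f(w) is the pairing of f with the monomial e_w.\<close>

definition serre_ok :: "('i \<Rightarrow> 'i \<Rightarrow> int) \<Rightarrow> 'i \<Rightarrow> 'i \<Rightarrow> ('i list \<Rightarrow> 'k::field) \<Rightarrow> bool" where
  "serre_ok A i j f \<longleftrightarrow> (\<forall>u v. let n = nat (1 - A i j) in
      (\<Sum>m\<le>n. (-1) ^ m * of_nat (n choose m) *
           f (u @ replicate (n - m) i @ [j] @ replicate m i @ v)) = 0)"

definition ON :: "'i set \<Rightarrow> ('i \<Rightarrow> 'i \<Rightarrow> int) \<Rightarrow> ('i list \<Rightarrow> 'k::field) set" where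
  "ON I A = {f. finite {w. f w \<noteq> 0} \<and> (\<forall>w. f w \<noteq> 0 \<longrightarrow> set w \<subseteq> I) \<and>
                (\<forall>i\<in>I. \<forall>j\<in>I. i \<noteq> j \<longrightarrow> serre_ok A i j f)}"

text \<open>Product of O(N) (dual to the coproduct of U(n), the e_i being primitive): shuffle product.\<close>

definition shuffle_mult :: "('i list \<Rightarrow> 'k::field) \<Rightarrow> ('i list \<Rightarrow> 'k) \<Rightarrow> 'i list \<Rightarrow> 'k" where
  "shuffle_mult f g w = (\<Sum>S\<in>Pow {0..<length w}. f (nths w S) * g (nths w ({0..<length w} - S)))"

definition unitON :: "'i list \<Rightarrow> 'k::field" where
  "unitON w = (if w = [] then 1 else 0)"

primrec shuffle_pow :: "('i list \<Rightarrow> 'k::field) \<Rightarrow> nat \<Rightarrow> 'i list \<Rightarrow> 'k" where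
  "shuffle_pow f 0 = unitON"
| "shuffle_pow f (Suc n) = shuffle_mult f (shuffle_pow f n)"

definition zeta :: "'i \<Rightarrow> 'i list \<Rightarrow> 'k::field" where
  "zeta i w = (if w = [i] then 1 else 0)"

text \<open>Weight (in Q_-) of the functional dual to the word w: minus the sum of its letters.\<close>
definition wt :: "'i list \<Rightarrow> 'i \<Rightarrow> int" where
  "wt w i = - int (count_list w i)"

definition weight_space :: "'i set \<Rightarrow> ('i \<Rightarrow> 'i \<Rightarrow> int) \<Rightarrow> ('i \<Rightarrow> int) \<Rightarrow> ('i list \<Rightarrow> 'k::field) set" where
  "weight_space I A lam = {f \<in> ON I A. \<forall>w. f w \<noteq> 0 \<longrightarrow> wt w = lam}"

definition weight_vector :: "'i set \<Rightarrow> ('i \<Rightarrow> 'i \<Rightarrow> int) \<Rightarrow> ('i list \<Rightarrow> 'k::field) \<Rightarrow> bool" where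
  "weight_vector I A f \<longleftrightarrow> (\<exists>lam. f \<in> weight_space I A lam)"

text \<open>Underline L(f): the mu such that Delta(f) has a nonzero component in O_mu (x) O_(lam-mu),
i.e. such that f(u v) is nonzero for some words u of weight mu and v.\<close>
definition Lwt :: "('i list \<Rightarrow> 'k::field) \<Rightarrow> ('i \<Rightarrow> int) set" where
  "Lwt f = {wt u | u v. f (u @ v) \<noteq> 0}"

text \<open>Q_R realised as real^'i (coordinates w.r.t. the simple roots).\<close>
definition toQR :: "('i \<Rightarrow> int) \<Rightarrow> real ^ ('i::finite)" where
  "toQR lam = (\<chi> i. of_int (lam i))"

definition Pol :: "('i::finite list \<Rightarrow> 'k::field) \<Rightarrow> (real ^ 'i) set" where
  "Pol f = convex hull (toQR ` Lwt f)"

definition SK :: "'i::finite set \<Rightarrow> ('i \<Rightarrow> 'i \<Rightarrow> int) \<Rightarrow> (real ^ 'i) set \<Rightarrow> ('i list \<Rightarrow> 'k::field) set" where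
  "SK I A K = lin_comb {f \<in> ON I A. weight_vector I A f \<and> Pol f \<subseteq> K}"

definition convex_polytope :: "(real ^ 'i::finite) set \<Rightarrow> bool" where
  "convex_polytope K \<longleftrightarrow> (\<exists>P. finite P \<and> K = convex hull P)"

text \<open>theta in Q_R^* given by its values t i on the simple roots.\<close>
definition Jth :: "'i set \<Rightarrow> ('i \<Rightarrow> real) \<Rightarrow> ('i \<Rightarrow> int) \<Rightarrow> real \<times> real" where
  "Jth I t lam = (- of_int (\<Sum>i\<in>I. lam i), - (\<Sum>i\<in>I. t i * of_int (lam i)))"

definition Ogam :: "'i set \<Rightarrow> ('i \<Rightarrow> 'i \<Rightarrow> int) \<Rightarrow> ('i \<Rightarrow> real) \<Rightarrow> real \<times> real \<Rightarrow> ('i list \<Rightarrow> 'k::field) set" where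
  "Ogam I A t g = {f \<in> ON I A. \<forall>w. f w \<noteq> 0 \<longrightarrow> Jth I t (wt w) = g}"

definition homog :: "'i set \<Rightarrow> ('i \<Rightarrow> 'i \<Rightarrow> int) \<Rightarrow> ('i \<Rightarrow> real) \<Rightarrow> ('i list \<Rightarrow> 'k::field) \<Rightarrow> bool" where
  "homog I A t a \<longleftrightarrow> (\<exists>g. a \<in> Ogam I A t g)"

text \<open>L_theta(a) and R_theta(a) = |a| - L_theta(a).\<close>
definition Lth :: "'i set \<Rightarrow> ('i \<Rightarrow> real) \<Rightarrow> ('i list \<Rightarrow> 'k::field) \<Rightarrow> (real \<times> real) set" where
  "Lth I t a = {Jth I t (wt u) | u v. a (u @ v) \<noteq> 0}"

definition Rth :: "'i set \<Rightarrow> ('i \<Rightarrow> real) \<Rightarrow> ('i list \<Rightarrow> 'k::field) \<Rightarrow> (real \<times> real) set" where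
  "Rth I t a = {Jth I t (wt v) | u v. a (u @ v) \<noteq> 0}"

definition Pi1 :: "(real \<times> real) set" where
  "Pi1 = {(r, d). d < 0 \<or> (d = 0 \<and> r \<ge> 0)}"

definition Pi2 :: "(real \<times> real) set" where
  "Pi2 = {(r, d). d > 0 \<or> (d = 0 \<and> r \<ge> 0)}"

definition shift :: "real \<times> real \<Rightarrow> (real \<times> real) set \<Rightarrow> (real \<times> real) set" where
  "shift g P = (\<lambda>x. g + x) ` P"

definition less1 :: "real \<times> real \<Rightarrow> real \<times> real \<Rightarrow> bool" where
  "less1 a b \<longleftrightarrow> shift a Pi1 \<subseteq> shift b Pi1 \<and> a \<noteq> b"

definition less2 :: "real \<times> real \<Rightarrow> real \<times> real \<Rightarrow> bool" where
  "less2 a b \<longleftrightarrow> shift a Pi2 \<subseteq> shift b Pi2 \<and> a \<noteq> b"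

definition F1 :: "'i set \<Rightarrow> ('i \<Rightarrow> 'i \<Rightarrow> int) \<Rightarrow> ('i \<Rightarrow> real) \<Rightarrow> real \<times> real \<Rightarrow> ('i list \<Rightarrow> 'k::field) set" where
  "F1 I A t g = lin_comb {a \<in> ON I A. homog I A t a \<and> Lth I t a \<subseteq> shift g Pi1}"

definition F2 :: "'i set \<Rightarrow> ('i \<Rightarrow> 'i \<Rightarrow> int) \<Rightarrow> ('i \<Rightarrow> real) \<Rightarrow> real \<times> real \<Rightarrow> ('i list \<Rightarrow> 'k::field) set" where
  "F2 I A t g = lin_comb {a \<in> ON I A. homog I A t a \<and> Rth I t a \<subseteq> shift g Pi2}"

text \<open>Strictly lower filtration pieces (the denominators of gr' and gr'').\<close>
definition F1lt :: "'i set \<Rightarrow> ('i \<Rightarrow> 'i \<Rightarrow> int) \<Rightarrow> ('i \<Rightarrow> real) \<Rightarrow> real \<times> real \<Rightarrow> ('i list \<Rightarrow> 'k::field) set" where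
  "F1lt I A t g = lin_comb (\<Union>{F1 I A t b | b. less1 b g})"

definition F2lt :: "'i set \<Rightarrow> ('i \<Rightarrow> 'i \<Rightarrow> int) \<Rightarrow> ('i \<Rightarrow> real) \<Rightarrow> real \<times> real \<Rightarrow> ('i list \<Rightarrow> 'k::field) set" where
  "F2lt I A t g = lin_comb (\<Union>{F2 I A t b | b. less2 b g})"

definition O_le0 where "O_le0 I A t = F1 I A t 0"
definition O_gt0 where "O_gt0 I A t = lin_comb (\<Union>g. F1 I A t g \<inter> Ogam I A t g)"
definition O_ge0 where "O_ge0 I A t = F2 I A t 0"
definition O_lt0 where "O_lt0 I A t = lin_comb (\<Union>g. F2 I A t g \<inter> Ogam I A t g)"

text \<open>Elements of O (x) O as functions on pairs of words; pure tensors.\<close>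
definition tens :: "('i list \<Rightarrow> 'k::field) \<Rightarrow> ('i list \<Rightarrow> 'k) \<Rightarrow> 'i list \<times> 'i list \<Rightarrow> 'k" where
  "tens x y = (\<lambda>(u, v). x u * y v)"

text \<open>Component of Delta(a) in O^alpha (x) O^(|a|-alpha), resp. O^(|a|-beta) (x) O^beta.\<close>
definition Dbar1 :: "'i set \<Rightarrow> ('i \<Rightarrow> real) \<Rightarrow> real \<times> real \<Rightarrow> ('i list \<Rightarrow> 'k::field) \<Rightarrow> 'i list \<times> 'i list \<Rightarrow> 'k" where
  "Dbar1 I t al a = (\<lambda>(u, v). if Jth I t (wt u) = al then a (u @ v) else 0)"

definition Dbar2 :: "'i set \<Rightarrow> ('i \<Rightarrow> real) \<Rightarrow> real \<times> real \<Rightarrow> ('i list \<Rightarrow> 'k::field) \<Rightarrow> 'i list \<times> 'i list \<Rightarrow> 'k" where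
  "Dbar2 I t be a = (\<lambda>(u, v). if Jth I t (wt v) = be then a (u @ v) else 0)"

text \<open>Induced basis of gr': pairs (alpha, b) with b in B, b in F'_alpha, b not in F'_<alpha
(the class of b in gr'_alpha); likewise for gr''.\<close>
definition ind1 where
  "ind1 I A t B = {(al, b). b \<in> B \<and> b \<in> F1 I A t al \<and> b \<notin> F1lt I A t al}"

definition ind2 where
  "ind2 I A t B = {(be, b). b \<in> B \<and> b \<in> F2 I A t be \<and> b \<notin> F2lt I A t be}"

definition polite :: "'i set \<Rightarrow> ('i \<Rightarrow> 'i \<Rightarrow> int) \<Rightarrow> ('i list \<Rightarrow> 'k::field) set \<Rightarrow> bool" where
  "polite I A B \<longleftrightarrow>
     B \<subseteq> ON I A \<and> lin_indep B \<and> lin_comb B = ON I A \<and>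
     (\<forall>b\<in>B. weight_vector I A b) \<and>
     (\<forall>i\<in>I. \<forall>n. shuffle_pow (zeta i) n \<in> B) \<and>
     (\<forall>t g. F1 I A t g = lin_comb (B \<inter> F1 I A t g)) \<and>
     (\<forall>t. inj_on (\<lambda>(al, b). Dbar1 I t al b) (ind1 I A t B) \<and>
          (\<lambda>(al, b). Dbar1 I t al b) ` ind1 I A t B =
            {tens x y | x y. x \<in> B \<inter> O_gt0 I A t \<and> y \<in> B \<inter> O_le0 I A t}) \<and>
     (\<forall>t g. F2 I A t g = lin_comb (B \<inter> F2 I A t g)) \<and>
     (\<forall>t. inj_on (\<lambda>(be, b). Dbar2 I t be b) (ind2 I A t B) \<and>
          (\<lambda>(be, b). Dbar2 I t be b) ` ind2 I A t B =
            {tens x y | x y. x \<in> B \<inter> O_ge0 I A t \<and> y \<in> B \<inter> O_lt0 I A t})"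

end

theory Submission
  imports Defs
begin

lemma lc_intro:
  assumes "finite t" "t \<subseteq> S" "f = (\<lambda>x. \<Sum>b\<in>t. c b * b x)"
  shows "f \<in> lin_comb S"
  unfolding lin_comb_def mem_Collect_eq
  apply (rule exI[of _ t])
  apply (rule exI[of _ c])
  using assms apply (intro conjI)
    apply assumption+
  done

lemma lc_elim:
  assumes "f \<in> lin_comb S"
  obtains t c where "finite t" "t \<subseteq> S" "f = (\<lambda>x. \<Sum>b\<in>t. c b * b x)"
  using assms unfolding lin_comb_def mem_Collect_eq
  apply (elim exE conjE)
  apply (rule that)
    apply assumption+
  done

lemma lc_sub: "x \<in> S \<Longrightarrow> x \<in> lin_comb S"
  by (rule lc_intro[of "{x}" _ _ "\<lambda>_. 1"]) auto

lemma lc_zero: "(\<lambda>x. 0) \<in> lin_comb S"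
  by (rule lc_intro[of "{}" _ _ "\<lambda>_. 0"]) auto

lemma lc_add:
  assumes "f \<in> lin_comb S" "g \<in> lin_comb S"
  shows "(\<lambda>x. f x + g x) \<in> lin_comb S"
proof -
  obtain t1 c1 where 1: "finite t1" "t1 \<subseteq> S" "f = (\<lambda>x. \<Sum>b\<in>t1. c1 b * b x)"
    using assms(1) by (rule lc_elim)
  obtain t2 c2 where 2: "finite t2" "t2 \<subseteq> S" "g = (\<lambda>x. \<Sum>b\<in>t2. c2 b * b x)"
    using assms(2) by (rule lc_elim)
  define c where "c b = (if b \<in> t1 then c1 b else 0) + (if b \<in> t2 then c2 b else 0)" for b
  have "(\<lambda>x. f x + g x) = (\<lambda>x. \<Sum>b\<in>t1 \<union> t2. c b * b x)"
  proof
    fix x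
    have a: "(\<Sum>b\<in>t1 \<union> t2. (if b \<in> t1 then c1 b * b x else 0)) = (\<Sum>b\<in>t1. c1 b * b x)"
      by (rule sum.mono_neutral_cong_right) (use 1 2 in auto)
    have b: "(\<Sum>b\<in>t1 \<union> t2. (if b \<in> t2 then c2 b * b x else 0)) = (\<Sum>b\<in>t2. c2 b * b x)"
      by (rule sum.mono_neutral_cong_right) (use 1 2 in auto)
    have "(\<Sum>b\<in>t1 \<union> t2. c b * b x) = (\<Sum>b\<in>t1 \<union> t2. (if b \<in> t1 then c1 b * b x else 0) + (if b \<in> t2 then c2 b * b x else 0))"
      by (rule sum.cong) (auto simp: c_def distrib_right)
    also have "\<dots> = (\<Sum>b\<in>t1. c1 b * b x) + (\<Sum>b\<in>t2. c2 b * b x)"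
      using a b by (simp add: sum.distrib)
    finally show "f x + g x = (\<Sum>b\<in>t1 \<union> t2. c b * b x)" using 1 2 by simp
  qed
  then show ?thesis using 1 2 by (intro lc_intro[of "t1 \<union> t2" _ _ c]) auto
qed

lemma lc_scale:
  assumes "f \<in> lin_comb S"
  shows "(\<lambda>x. a * f x) \<in> lin_comb S"
proof -
  obtain t c where 1: "finite t" "t \<subseteq> S" "f = (\<lambda>x. \<Sum>b\<in>t. c b * b x)"
    using assms(1) by (rule lc_elim)
  have "(\<lambda>x. a * f x) = (\<lambda>x. \<Sum>b\<in>t. (a * c b) * b x)"
  proof
    fix x
    show "a * f x = (\<Sum>b\<in>t. (a * c b) * b x)"
      unfolding 1(3) sum_distrib_left by (rule sum.cong) (simp_all add: mult.assoc)
  qed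
  then show ?thesis using 1 by (intro lc_intro[of t _ _ "\<lambda>b. a * c b"]) auto
qed

lemma lc_closed:
  assumes "T \<subseteq> lin_comb S"
  shows "lin_comb T \<subseteq> lin_comb S"
proof
  fix f assume "f \<in> lin_comb T"
  then obtain t c where 1: "finite t" "t \<subseteq> T" "f = (\<lambda>x. \<Sum>b\<in>t. c b * b x)"
    by (rule lc_elim)
  have "t \<subseteq> T \<Longrightarrow> (\<lambda>x. \<Sum>b\<in>t. c b * b x) \<in> lin_comb S"
    using 1(1)
  proof (induction t rule: finite_induct)
    case empty
    then show ?case using lc_zero by simp
  next
    case (insert y F)
    have "(\<lambda>x. c y * y x) \<in> lin_comb S" using insert assms by (intro lc_scale) auto
    then have "(\<lambda>x. (c y * y x) + (\<Sum>b\<in>F. c b * b x)) \<in> lin_comb S"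
      using insert by (intro lc_add[where f="\<lambda>x. c y * y x", simplified]) auto
    then show ?case using insert by simp
  qed
  then show "f \<in> lin_comb S" using 1 by simp
qed

lemma lc_nonzero:
  assumes "h \<in> lin_comb S" "h w \<noteq> 0"
  shows "\<exists>s\<in>S. s w \<noteq> 0"
proof -
  obtain t c where 1: "finite t" "t \<subseteq> S" "h = (\<lambda>x. \<Sum>b\<in>t. c b * b x)"
    using assms(1) by (rule lc_elim)
  have "(\<Sum>b\<in>t. c b * b w) \<noteq> 0" using 1 assms(2) by simp
  then obtain b where "b \<in> t" "c b * b w \<noteq> 0" by (meson sum.neutral)
  then show ?thesis using 1 by auto
qed

lemma lc_unique:
  assumes li: "lin_indep B" and t: "finite t" "t \<subseteq> B" and nz: "\<forall>b\<in>t. c b \<noteq> 0"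
    and f: "f = (\<lambda>x. \<Sum>b\<in>t. c b * b x)" and fV: "f \<in> lin_comb (B \<inter> V)"
  shows "t \<subseteq> V"
proof -
  obtain s d where 1: "finite s" "s \<subseteq> B \<inter> V" "f = (\<lambda>x. \<Sum>b\<in>s. d b * b x)"
    using fV by (rule lc_elim)
  define e where "e b = (if b \<in> t then c b else 0) - (if b \<in> s then d b else 0)" for b
  have z: "(\<lambda>x. \<Sum>b\<in>t \<union> s. e b * b x) = (\<lambda>x. 0)"
  proof
    fix x
    have a: "(\<Sum>b\<in>t \<union> s. (if b \<in> t then c b * b x else 0)) = (\<Sum>b\<in>t. c b * b x)"
      by (rule sum.mono_neutral_cong_right) (use 1 t in auto)
    have b: "(\<Sum>b\<in>t \<union> s. (if b \<in> s then d b * b x else 0)) = (\<Sum>b\<in>s. d b * b x)"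
      by (rule sum.mono_neutral_cong_right) (use 1 t in auto)
    have "(\<Sum>b\<in>t \<union> s. e b * b x) = (\<Sum>b\<in>t \<union> s. (if b \<in> t then c b * b x else 0) - (if b \<in> s then d b * b x else 0))"
      by (rule sum.cong) (auto simp: e_def left_diff_distrib)
    also have "\<dots> = (\<Sum>b\<in>t. c b * b x) - (\<Sum>b\<in>s. d b * b x)"
      using a b by (simp add: sum_subtractf)
    also have "\<dots> = 0" using f 1 by (simp add: fun_eq_iff)
    finally show "(\<Sum>b\<in>t \<union> s. e b * b x) = 0" .
  qed
  have fu: "finite (t \<union> s)" "t \<union> s \<subseteq> B" using 1 t by auto
  have ez: "\<forall>b\<in>t \<union> s. e b = 0"
    using li z fu unfolding lin_indep_def by blast
  have "b \<in> s" if "b \<in> t" for b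
  proof (rule ccontr)
    assume "b \<notin> s"
    then have "e b = c b" using that unfolding e_def by simp
    moreover have "e b = 0" using ez that by blast
    ultimately show False using nz that by simp
  qed
  then show ?thesis using 1 by blast
qed


lemma sum_I_UNIV:
  fixes u :: "'i::finite list" and a :: "real ^ 'i"
  assumes "set u \<subseteq> I"
  shows "(\<Sum>i\<in>I. a $ i * of_int (wt u i)) = a \<bullet> toQR (wt u)"
proof -
  have "(\<Sum>i\<in>I. a $ i * of_int (wt u i)) = (\<Sum>i\<in>UNIV. a $ i * of_int (wt u i))"
  proof (rule sum.mono_neutral_left)
    show "\<forall>i\<in>UNIV - I. a $ i * of_int (wt u i) = 0"
    proof
      fix i assume "i \<in> UNIV - I"
      then have "i \<notin> set u" using assms by blast
      then show "a $ i * of_int (wt u i) = 0" by (simp add: wt_def)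
    qed
  qed simp_all
  also have "\<dots> = a \<bullet> toQR (wt u)"
    by (simp add: inner_vec_def toQR_def)
  finally show ?thesis .
qed

lemma F1_Lth:
  fixes b :: "'i list \<Rightarrow> 'k::field"
  assumes "b \<in> F1 I A t g" "b (u @ v) \<noteq> 0"
  shows "Jth I t (wt u) \<in> shift g Pi1"
proof -
  obtain s :: "'i list \<Rightarrow> 'k" where s: "s \<in> {a \<in> ON I A. homog I A t a \<and> Lth I t a \<subseteq> shift g Pi1}" "s (u @ v) \<noteq> 0"
  proof -
    have "\<exists>s\<in>{a \<in> (ON I A :: ('i list \<Rightarrow> 'k) set). homog I A t a \<and> Lth I t a \<subseteq> shift g Pi1}. s (u @ v) \<noteq> 0"
      by (rule lc_nonzero[OF assms(1)[unfolded F1_def] assms(2)])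
    then show ?thesis using that by blast
  qed
  have "Jth I t (wt u) \<in> Lth I t s" unfolding Lth_def using s(2) by blast
  then show ?thesis using s(1) by blast
qed

lemma ON_set:
  assumes "f \<in> ON I A" "f w \<noteq> 0" shows "set w \<subseteq> I"
  using assms unfolding ON_def by blast

lemma claimF:
  fixes f :: "'i::finite list \<Rightarrow> 'k::field" and a :: "real ^ 'i"
  assumes fON: "f \<in> ON I A" and wv: "weight_vector I A f" and PK: "Pol f \<subseteq> K"
    and sep: "\<forall>x\<in>K. c < a \<bullet> x"
  shows "f \<in> F1 I A (\<lambda>i. a $ i) (0, - c)"
  unfolding F1_def
proof (rule lc_sub, intro CollectI conjI)
  show "f \<in> ON I A" by fact
  obtain lam where lam: "f \<in> weight_space I A lam" using wv unfolding weight_vector_def by blast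
  then have "f \<in> Ogam I A (\<lambda>i. a $ i) (Jth I (\<lambda>i. a $ i) lam)"
    unfolding weight_space_def Ogam_def by auto
  then show "homog I A (\<lambda>i. a $ i) f" unfolding homog_def by blast
  show "Lth I (\<lambda>i. a $ i) f \<subseteq> shift (0, - c) Pi1"
  proof
    fix y assume "y \<in> Lth I (\<lambda>i. a $ i) f"
    then obtain u v where y: "y = Jth I (\<lambda>i. a $ i) (wt u)" and nz: "f (u @ v) \<noteq> 0"
      unfolding Lth_def by blast
    have setu: "set u \<subseteq> I" using ON_set[OF fON nz] by auto
    have "wt u \<in> Lwt f" unfolding Lwt_def using nz by blast
    then have "toQR (wt u) \<in> Pol f" unfolding Pol_def by (intro hull_inc imageI)
    then have "c < a \<bullet> toQR (wt u)" using PK sep by blast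
    then have lt: "c < (\<Sum>i\<in>I. a $ i * of_int (wt u i))" using sum_I_UNIV[OF setu] by simp
    have "y = (0, - c) + (fst y, snd y + c)" by simp
    moreover have "(fst y, snd y + c) \<in> Pi1" using lt unfolding Pi1_def y Jth_def by simp
    ultimately show "y \<in> shift (0, - c) Pi1" unfolding shift_def by blast
  qed
qed

lemma claimM:
  fixes b :: "'i::finite list \<Rightarrow> 'k::field" and K :: "(real ^ 'i) set"
  assumes bON: "b \<in> ON I A" and nz: "b (u @ v) \<noteq> 0"
    and cK: "convex K" "closed K"
    and H: "\<And>a c. \<forall>x\<in>K. c < a \<bullet> x \<Longrightarrow> b \<in> F1 I A (\<lambda>i. a $ i) (0, - c)"
  shows "toQR (wt u) \<in> K"
proof (rule ccontr)
  assume "toQR (wt u) \<notin> K"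
  then obtain a c where ac: "a \<bullet> toQR (wt u) < c" "\<forall>x\<in>K. c < a \<bullet> x"
    using separating_hyperplane_closed_point[OF cK] by blast
  have setu: "set u \<subseteq> I" using ON_set[OF bON nz] by auto
  have "Jth I (\<lambda>i. a $ i) (wt u) \<in> shift (0, - c) Pi1"
    using F1_Lth[OF H[OF ac(2)] nz] .
  then obtain p where p: "p \<in> Pi1" "Jth I (\<lambda>i. a $ i) (wt u) = (0, - c) + p"
    unfolding shift_def by blast
  have "snd p = - (\<Sum>i\<in>I. a $ i * of_int (wt u i)) + c"
    using arg_cong[OF p(2), of snd] unfolding Jth_def by simp
  also have "\<dots> = c - a \<bullet> toQR (wt u)" using sum_I_UNIV[OF setu] by simp
  finally have "snd p > 0" using ac(1) by simp
  then show False using p(1) unfolding Pi1_def by auto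
qed

theorem proposition3p1:
  fixes I :: "'i::finite set" and A :: "'i \<Rightarrow> 'i \<Rightarrow> int"
    and B :: "('i list \<Rightarrow> 'k::field_char_0) set" and K :: "(real ^ 'i) set"
  assumes "cartan_finite_type I A"
    and "polite I A B"
    and "convex_polytope K"
  shows "SK I A K = lin_comb (B \<inter> SK I A K)"
proof -
  obtain P where P: "finite P" "K = convex hull P"
    using assms(3) unfolding convex_polytope_def by blast
  have cK1: "convex K" unfolding P(2) by (rule convex_convex_hull)
  have cK2: "closed K" unfolding P(2) by (rule compact_imp_closed[OF finite_imp_compact_convex_hull[OF P(1)]])
  note cK = cK1 cK2
  have pol: "B \<subseteq> ON I A \<and> lin_indep B \<and> lin_comb B = ON I A \<and>
     (\<forall>b\<in>B. weight_vector I A b) \<and> (\<forall>i\<in>I. \<forall>n. shuffle_pow (zeta i) n \<in> B) \<and>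
     (\<forall>t g. F1 I A t g = lin_comb (B \<inter> F1 I A t g))"
    using assms(2) unfolding polite_def by (elim conjE) (intro conjI)
  have BON: "B \<subseteq> ON I A" using pol by (elim conjE)
  have li: "lin_indep B" using pol by (elim conjE)
  have spanB: "lin_comb B = ON I A" using pol by (elim conjE)
  have bwv: "\<forall>b\<in>B. weight_vector I A b" using pol by (elim conjE)
  have F1c: "\<forall>t g. F1 I A t g = lin_comb (B \<inter> F1 I A t g)" using pol by (elim conjE)
  define G where "G = {f \<in> (ON I A :: ('i list \<Rightarrow> 'k) set). weight_vector I A f \<and> Pol f \<subseteq> K}"
  have SKG: "SK I A K = lin_comb G" unfolding SK_def G_def ..
  have G_sub: "G \<subseteq> lin_comb (B \<inter> SK I A K)"
  proof
    fix f assume fG: "f \<in> G"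
    then have fON: "f \<in> ON I A" and fwv: "weight_vector I A f" and fP: "Pol f \<subseteq> K"
      unfolding G_def by auto
    from fON obtain t c where t: "finite t" "t \<subseteq> B" "f = (\<lambda>x. \<Sum>b\<in>t. c b * b x)"
      unfolding spanB[symmetric] by (rule lc_elim)
    define t' where "t' = {b \<in> t. c b \<noteq> 0}"
    have t': "finite t'" "t' \<subseteq> B" "\<forall>b\<in>t'. c b \<noteq> 0"
      using t unfolding t'_def by auto
    have ft': "f = (\<lambda>x. \<Sum>b\<in>t'. c b * b x)"
    proof
      fix x
      show "f x = (\<Sum>b\<in>t'. c b * b x)"
        unfolding t(3) t'_def by (rule sum.mono_neutral_right) (use t in auto)
    qed
    have inF: "t' \<subseteq> F1 I A (\<lambda>i. a $ i) (0, - c')" if "\<forall>x\<in>K. c' < a \<bullet> x" for a c'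
    proof -
      have "f \<in> F1 I A (\<lambda>i. a $ i) (0, - c')" using claimF[OF fON fwv fP that] .
      note hf = this
      have eq: "F1 I A (\<lambda>i. a $ i) (0, - c') = lin_comb (B \<inter> F1 I A (\<lambda>i. a $ i) (0, - c'))"
        using F1c by blast
      have "f \<in> lin_comb (B \<inter> F1 I A (\<lambda>i. a $ i) (0, - c'))" using hf by (subst (asm) eq)
      then show ?thesis using lc_unique[OF li t'(1) t'(2) t'(3) ft'] by blast
    qed
    have "t' \<subseteq> B \<inter> SK I A K"
    proof
      fix b assume bt: "b \<in> t'"
      have bB: "b \<in> B" using bt t' by auto
      have bON: "b \<in> ON I A" using bB BON by auto
      have "Pol b \<subseteq> K"
        unfolding Pol_def
      proof (rule hull_minimal[where S=convex, OF _ cK1])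
        show "toQR ` Lwt b \<subseteq> K"
        proof
          fix y assume "y \<in> toQR ` Lwt b"
          then obtain u v where y: "y = toQR (wt u)" and nz: "b (u @ v) \<noteq> 0"
            unfolding Lwt_def by blast
          show "y \<in> K" unfolding y
            by (rule claimM[OF bON nz cK]) (use inF bt in blast)
        qed
      qed
      then have "b \<in> G" unfolding G_def using bON bB bwv by blast
      then have "b \<in> SK I A K" unfolding SKG by (rule lc_sub)
      then show "b \<in> B \<inter> SK I A K" using bB by blast
    qed
    then show "f \<in> lin_comb (B \<inter> SK I A K)" by (rule lc_intro[OF t'(1) _ ft'])
  qed
  show ?thesis
  proof
    show "SK I A K \<subseteq> lin_comb (B \<inter> SK I A K)"
      unfolding SKG using lc_closed[OF G_sub] SKG by simp
    have "B \<inter> SK I A K \<subseteq> lin_comb G" by (simp add: SKG)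
    then show "lin_comb (B \<inter> SK I A K) \<subseteq> SK I A K"
      unfolding SKG by (rule lc_closed)
  qed
qed

end
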